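(* Let $\alpha>1$. Let $N\ge1$, $0\le N_1<N$, and let $p=(p_1,\dots,p_N)$ be a probability vector with $p_1=\dots=p_{N_1}=0$ and $p_k>0$ for $N_1<k\le N$. Let $c_1,\dots,c_N$ be fixed reals, not all zero, with $0\le c_k\le1$ for $k\le N_1$, $|c_k|\le1$ for $k>N_1$, and $\sum_{k=1}^Nc_k=0$. For $0<\varepsilon\le\min_{k>N_1}p_k$ define $p(\varepsilon)$ by $p_k(\varepsilon)=c_k\varepsilon$ for $k\le N_1$ and $p_k(\varepsilon)=p_k+c_k\varepsilon$ for $k>N_1$. Write $S=\sum_{k=N_1+1}^Np_k^\alpha$ and $T=\sum_{k=N_1+1}^Nc_kp_k^{\alpha-1}$. Then, as $\varepsilon\to0+$: (i) if $T\ne0$, then $\mathcal H_\alpha(p)-\mathcal H_\alpha(p(\varepsilon))\sim\frac{\alpha\varepsilon}{\alpha-1}\,T\,S^{-1}$; (ii) if $T=0$, $1<\alpha<2$, $N_1\ge1$ and $c_k\ne0$ for some $k\le N_1$, then $\mathcal H_\alpha(p)-\mathcal H_\alpha(p(\varepsilon))\sim\frac{\varepsilon^\alpha}{\alpha-1}\Big(\sum_{k=1}^{N_1}c_k^\alpha\Big)S^{-1}$; (iii) if $T=0$, $1<\alpha<2$ and $c_k=0$ for all $k\le N_1$, then $\mathcal H_\alpha(p)-\mathcal H_\alpha(p(\varepsilon))\sim\frac{\alpha\varepsilon^2}{2}\Big(\sum_{k=N_1+1}^Nc_k^2p_k^{\alpha-2}\Big)S^{-1}$; (iv) if $T=0$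 and $\alpha=2$, then $\mathcal H_2(p)-\mathcal H_2(p(\varepsilon))\sim\varepsilon^2\Big(\sum_{k=1}^Nc_k^2\Big)\Big(\sum_{k=N_1+1}^Np_k^2\Big)^{-1}$; (v) if $T=0$ and $\alpha>2$, then $\mathcal H_\alpha(p)-\mathcal H_\alpha(p(\varepsilon))\sim\frac{\alpha\varepsilon^2}{2}\Big(\sum_{k=N_1+1}^Nc_k^2p_k^{\alpha-2}\Big)S^{-1}$.
   Context: $\mathcal H_\alpha(p)=\frac1{1-\alpha}\log\sum_kp_k^\alpha$ (Rényi entropy), with $0^\alpha=0$; logarithms are natural. $a(\varepsilon)\sim b(\varepsilon)$ means $a(\varepsilon)/b(\varepsilon)\to1$. *)

theory Defs
  imports "HOL-Analysis.Analysis" "HOL-Library.Landau_Symbols"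
begin

text \<open>Renyi entropy of order alpha of a vector p indexed by 1..N, natural log,
  with the convention 0 powr a = 0 (built into powr).\<close>
definition renyi :: "real \<Rightarrow> nat \<Rightarrow> (nat \<Rightarrow> real) \<Rightarrow> real" where
  "renyi \<alpha> N p = 1 / (1 - \<alpha>) * ln (\<Sum>k=1..N. p k powr \<alpha>)"

definition perturb :: "nat \<Rightarrow> (nat \<Rightarrow> real) \<Rightarrow> (nat \<Rightarrow> real) \<Rightarrow> real \<Rightarrow> nat \<Rightarrow> real" where
  "perturb N1 p c \<epsilon> k = (if k \<le> N1 then c k * \<epsilon> else p k + c k * \<epsilon>)"

end

theory Submission
  imports Defs
begin

lemma taylor2:
  fixes p c a :: real
  assumes p: "p > 0"
  shows "((\<lambda>x. ((p + c*x) powr a - p powr a - a*p powr (a-1)*c*x)/x^2) \<longlongrightarrow> a*(a-1)/2*p powr (a-2)*c^2) (at_right 0)"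
proof -
  have lim: "((\<lambda>x. p + c*x) \<longlongrightarrow> p) (at_right 0)"
    by (auto intro!: tendsto_eq_intros)
  have evp: "eventually (\<lambda>x. p + c*x > 0) (at_right 0)"
    using order_tendstoD(1)[OF lim p] .
  have d2: "((\<lambda>x. (p + c*x) powr (a-1)) has_real_derivative (a-1)*p powr (a-1-1)*c) (at 0)"
    using p by (auto intro!: derivative_eq_intros)
  hence q: "((\<lambda>x. ((p + c*x) powr (a-1) - p powr (a-1)) / x) \<longlongrightarrow> (a-1)*p powr (a-1-1)*c) (at_right 0)"
    unfolding has_field_derivative_iff by (auto intro: tendsto_within_subset)
  have "((\<lambda>x. (a*c/2) * (((p + c*x) powr (a-1) - p powr (a-1)) / x)) \<longlongrightarrow> (a*c/2)*((a-1)*p powr (a-1-1)*c)) (at_right 0)"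
    by (intro tendsto_mult q tendsto_const)
  hence L: "((\<lambda>x. (a*c*(p+c*x) powr (a-1) - a*p powr (a-1)*c) / (2*x)) \<longlongrightarrow> a*(a-1)/2*p powr (a-2)*c^2) (at_right 0)"
    by (simp add: field_simps power2_eq_square diff_diff_eq)
  show ?thesis
  proof (rule lhopital_right_0[OF _ _ _ _ _ _ L])
    show "((\<lambda>x. (p + c*x) powr a - p powr a - a*p powr (a-1)*c*x) \<longlongrightarrow> 0) (at_right 0)"
      using p by (auto intro!: tendsto_eq_intros)
    show "((\<lambda>x::real. x^2) \<longlongrightarrow> 0) (at_right 0)"
      by (auto intro!: tendsto_eq_intros)
    show "eventually (\<lambda>x::real. x^2 \<noteq> 0) (at_right 0)"
      by (auto simp: eventually_at_right_field intro: exI[of _ 1])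
    show "eventually (\<lambda>x::real. 2*x \<noteq> 0) (at_right 0)"
      by (auto simp: eventually_at_right_field intro: exI[of _ 1])
    show "eventually (\<lambda>x. ((\<lambda>x. (p + c*x) powr a - p powr a - a*p powr (a-1)*c*x) has_real_derivative
        (a*c*(p+c*x) powr (a-1) - a*p powr (a-1)*c)) (at x)) (at_right 0)"
      using evp by eventually_elim (auto intro!: derivative_eq_intros simp: field_simps)
    show "eventually (\<lambda>x. ((\<lambda>x::real. x^2) has_real_derivative 2*x) (at x)) (at_right 0)"
      by (auto intro!: derivative_eq_intros always_eventually)
  qed
qed

lemma logequiv:
  fixes F M :: "real \<Rightarrow> real" and S K a :: real
  assumes S: "S > 0" and a: "a > 1" and K: "K \<noteq> 0"
    and lim: "((\<lambda>x. (F x - S)/M x) \<longlongrightarrow> K) (at_right 0)"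
    and M0: "(M \<longlongrightarrow> 0) (at_right 0)" and Mne: "eventually (\<lambda>x. M x \<noteq> 0) (at_right 0)"
  shows "(\<lambda>x. 1/(1-a)*ln S - 1/(1-a)*ln (F x)) \<sim>[at_right 0] (\<lambda>x. K*M x/S/(a-1))"
proof (rule asymp_equivI')
  have "((\<lambda>x. (F x - S)/M x * M x) \<longlongrightarrow> K*0) (at_right 0)"
    by (intro tendsto_mult lim M0)
  moreover have "eventually (\<lambda>x. (F x - S)/M x * M x = F x - S) (at_right 0)"
    using Mne by eventually_elim simp
  ultimately have FS: "((\<lambda>x. F x - S) \<longlongrightarrow> 0) (at_right 0)"
    by (simp add: tendsto_cong)
  have "((\<lambda>x. (F x - S) + S) \<longlongrightarrow> 0 + S) (at_right 0)"
    by (intro tendsto_add FS tendsto_const)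
  hence Flim: "(F \<longlongrightarrow> S) (at_right 0)" by simp
  have evne: "eventually (\<lambda>x. (F x - S)/M x \<noteq> 0) (at_right 0)"
    using tendsto_imp_eventually_ne[OF lim K] .
  hence evF: "eventually (\<lambda>x. F x \<noteq> S) (at_right 0)"
    by eventually_elim auto
  have Fat: "filterlim F (at S) (at_right 0)"
    by (rule filterlim_atI[OF Flim evF])
  have lnq: "((\<lambda>y. (ln y - ln S)/(y - S)) \<longlongrightarrow> 1/S) (at S)"
    using DERIV_ln_divide[OF S] unfolding has_field_derivative_iff .
  have comp: "((\<lambda>x. (ln (F x) - ln S)/(F x - S)) \<longlongrightarrow> 1/S) (at_right 0)"
    using filterlim_compose[OF lnq Fat] by (simp add: o_def)
  have "((\<lambda>x. (ln (F x) - ln S)/(F x - S) * ((F x - S)/M x) * (S/K)) \<longlongrightarrow> 1/S*K*(S/K)) (at_right 0)"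
    by (intro tendsto_mult comp lim tendsto_const)
  hence P: "((\<lambda>x. (ln (F x) - ln S)/(F x - S) * ((F x - S)/M x) * (S/K)) \<longlongrightarrow> 1) (at_right 0)"
    using S K by simp
  have "eventually (\<lambda>x. (ln (F x) - ln S)/(F x - S) * ((F x - S)/M x) * (S/K) =
     (1/(1-a)*ln S - 1/(1-a)*ln (F x)) / (K*M x/S/(a-1))) (at_right 0)"
    using evF Mne
  proof eventually_elim
    case (elim x)
    have a1: "1 - a \<noteq> 0" "a - 1 \<noteq> 0" using a by auto
    have "1-a = -(a-1)" by simp
    hence "1/(1-a) = -(1/(a-1))" by (metis divide_minus_right)
    hence e1: "1/(1-a)*ln S - 1/(1-a)*ln (F x) = (ln (F x) - ln S)/(a-1)"
      by (simp add: right_diff_distrib[symmetric] diff_divide_distrib)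
    have e2: "\<And>X Y Mx. Y \<noteq> 0 \<Longrightarrow> Mx \<noteq> 0 \<Longrightarrow> X/Y*(Y/Mx)*(S/K) = (X/(a-1))/(K*Mx/S/(a-1))"
      using a1 S K by (simp add: field_simps)
    show ?case unfolding e1 using e2 elim by simp
  qed
  thus "((\<lambda>x. (1/(1-a)*ln S - 1/(1-a)*ln (F x)) / (K*M x/S/(a-1))) \<longlongrightarrow> 1) (at_right 0)"
    using P by (simp add: tendsto_cong)
qed

lemma sum_split1: "m \<le> n \<Longrightarrow> sum f {1..n::nat} = sum f {1..m} + sum f {m+1..n}"
proof -
  assume "m \<le> n"
  hence "{1..n} = {1..m} \<union> {m+1..n}" by auto
  thus ?thesis by (simp add: sum.union_disjoint ivl_disj_int)
qed

theorem mainTheorem9: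
  fixes \<alpha> :: real and N N1 :: nat and p c :: "nat \<Rightarrow> real"
  assumes "\<alpha> > 1" and "N \<ge> 1" and "N1 < N"
    and "\<And>k. k \<in> {1..N1} \<Longrightarrow> p k = 0"
    and "\<And>k. k \<in> {N1+1..N} \<Longrightarrow> p k > 0"
    and "(\<Sum>k=1..N. p k) = 1"
    and "\<exists>k\<in>{1..N}. c k \<noteq> 0"
    and "\<And>k. k \<in> {1..N1} \<Longrightarrow> 0 \<le> c k \<and> c k \<le> 1"
    and "\<And>k. k \<in> {N1+1..N} \<Longrightarrow> \<bar>c k\<bar> \<le> 1"
    and "(\<Sum>k=1..N. c k) = 0"
  defines "S \<equiv> (\<Sum>k=N1+1..N. p k powr \<alpha>)"
    and "T \<equiv> (\<Sum>k=N1+1..N. c k * p k powr (\<alpha> - 1))"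
    and "D \<equiv> (\<lambda>\<epsilon>. renyi \<alpha> N p - renyi \<alpha> N (perturb N1 p c \<epsilon>))"
  shows
    "(T \<noteq> 0 \<longrightarrow> D \<sim>[at_right 0] (\<lambda>\<epsilon>. \<alpha> * \<epsilon> / (\<alpha> - 1) * T / S))
   \<and> (T = 0 \<and> \<alpha> < 2 \<and> N1 \<ge> 1 \<and> (\<exists>k\<in>{1..N1}. c k \<noteq> 0) \<longrightarrow>
        D \<sim>[at_right 0] (\<lambda>\<epsilon>. \<epsilon> powr \<alpha> / (\<alpha> - 1) * (\<Sum>k=1..N1. c k powr \<alpha>) / S))
   \<and> (T = 0 \<and> \<alpha> < 2 \<and> (\<forall>k\<in>{1..N1}. c k = 0) \<longrightarrow>
        D \<sim>[at_right 0] (\<lambda>\<epsilon>. \<alpha> * \<epsilon>\<^sup>2 / 2 * (\<Sum>k=N1+1..N. (c k)\<^sup>2 * p k powr (\<alpha> - 2)) / S))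
   \<and> (T = 0 \<and> \<alpha> = 2 \<longrightarrow>
        D \<sim>[at_right 0] (\<lambda>\<epsilon>. \<epsilon>\<^sup>2 * (\<Sum>k=1..N. (c k)\<^sup>2) / (\<Sum>k=N1+1..N. (p k)\<^sup>2)))
   \<and> (T = 0 \<and> \<alpha> > 2 \<longrightarrow>
        D \<sim>[at_right 0] (\<lambda>\<epsilon>. \<alpha> * \<epsilon>\<^sup>2 / 2 * (\<Sum>k=N1+1..N. (c k)\<^sup>2 * p k powr (\<alpha> - 2)) / S))"
proof -
  note a1 = assms(1)
  have N1N: "N1 \<le> N" using assms(3) by simp
  have Ssum: "(\<Sum>k=1..N. p k powr \<alpha>) = S"
    unfolding S_def using sum_split1[OF N1N, of "\<lambda>k. p k powr \<alpha>"] assms(4) by simp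
  have Spos: "S > 0" unfolding S_def
    by (rule sum_pos) (use assms(3,5) in fastforce)+
  define F where "F \<epsilon> = (\<Sum>k=1..N. perturb N1 p c \<epsilon> k powr \<alpha>)" for \<epsilon>
  define C where "C = (\<Sum>k=1..N1. c k powr \<alpha>)"
  define B where "B \<epsilon> = (\<Sum>k=N1+1..N. (p k + c k*\<epsilon>) powr \<alpha> - p k powr \<alpha>)" for \<epsilon>
  define Q where "Q = (\<Sum>k=N1+1..N. (c k)\<^sup>2 * p k powr (\<alpha> - 2))"
  define Bq where "Bq \<epsilon> = (B \<epsilon> - \<alpha>*T*\<epsilon>)/\<epsilon>^2" for \<epsilon>
  have Dform: "D = (\<lambda>\<epsilon>. 1/(1-\<alpha>)*ln S - 1/(1-\<alpha>)*ln (F \<epsilon>))"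
    unfolding D_def renyi_def Ssum F_def by (rule refl)
  have Fdec: "F \<epsilon> = S + C * \<epsilon> powr \<alpha> + B \<epsilon>" if "\<epsilon> > 0" for \<epsilon>
  proof -
    have "F \<epsilon> = (\<Sum>k=1..N1. perturb N1 p c \<epsilon> k powr \<alpha>) + (\<Sum>k=N1+1..N. perturb N1 p c \<epsilon> k powr \<alpha>)"
      unfolding F_def by (rule sum_split1[OF N1N])
    also have "(\<Sum>k=1..N1. perturb N1 p c \<epsilon> k powr \<alpha>) = C * \<epsilon> powr \<alpha>"
      unfolding C_def sum_distrib_right by (intro sum.cong) (auto simp: perturb_def powr_mult)
    also have "(\<Sum>k=N1+1..N. perturb N1 p c \<epsilon> k powr \<alpha>) = (\<Sum>k=N1+1..N. (p k + c k*\<epsilon>) powr \<alpha>)"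
      by (intro sum.cong) (auto simp: perturb_def)
    also have "\<dots> = S + B \<epsilon>"
      unfolding S_def B_def by (simp add: sum_subtractf)
    finally show ?thesis by simp
  qed
  have Bqlim: "(Bq \<longlongrightarrow> \<alpha>*(\<alpha>-1)/2*Q) (at_right 0)"
  proof -
    have L: "((\<lambda>\<epsilon>. \<Sum>k=N1+1..N. ((p k + c k*\<epsilon>) powr \<alpha> - p k powr \<alpha> - \<alpha>*p k powr (\<alpha>-1)*c k*\<epsilon>)/\<epsilon>^2)
        \<longlongrightarrow> (\<Sum>k=N1+1..N. \<alpha>*(\<alpha>-1)/2*p k powr (\<alpha>-2)*(c k)^2)) (at_right 0)"
      by (intro tendsto_sum taylor2) (use assms(5) in auto)
    have e1: "(\<lambda>\<epsilon>. \<Sum>k=N1+1..N. ((p k + c k*\<epsilon>) powr \<alpha> - p k powr \<alpha> - \<alpha>*p k powr (\<alpha>-1)*c k*\<epsilon>)/\<epsilon>^2) = Bq"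
    proof
      fix \<epsilon> :: real
      have "B \<epsilon> - \<alpha>*T*\<epsilon> = (\<Sum>k=N1+1..N. (p k + c k*\<epsilon>) powr \<alpha> - p k powr \<alpha> - \<alpha>*p k powr (\<alpha>-1)*c k*\<epsilon>)"
        by (simp add: B_def T_def sum_subtractf sum_distrib_left sum_distrib_right mult_ac)
      thus "(\<Sum>k=N1+1..N. ((p k + c k*\<epsilon>) powr \<alpha> - p k powr \<alpha> - \<alpha>*p k powr (\<alpha>-1)*c k*\<epsilon>)/\<epsilon>^2) = Bq \<epsilon>"
        by (simp add: Bq_def sum_divide_distrib)
    qed
    have e2: "(\<Sum>k=N1+1..N. \<alpha>*(\<alpha>-1)/2*p k powr (\<alpha>-2)*(c k)^2) = \<alpha>*(\<alpha>-1)/2*Q"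
      by (simp add: Q_def sum_distrib_left mult_ac)
    show ?thesis using L unfolding e1 e2 .
  qed
  have evp: "eventually (\<lambda>\<epsilon>::real. \<epsilon> > 0) (at_right 0)"
    by (rule eventually_at_right_less)
  have plim: "((\<lambda>\<epsilon>::real. \<epsilon> powr r) \<longlongrightarrow> 0) (at_right 0)" if "r > 0" for r
    by (rule tendsto_zero_powrI[OF tendsto_ident_at tendsto_const _ that])
       (use evp in \<open>auto elim: eventually_mono\<close>)
  have Bsplit: "B \<epsilon> = \<epsilon>^2 * Bq \<epsilon> + \<alpha>*T*\<epsilon>" if "\<epsilon> > 0" for \<epsilon>
    using that by (simp add: Bq_def)
  have Qpos: "Q > 0"
  proof -
    have "\<exists>k\<in>{N1+1..N}. c k \<noteq> 0"
    proof (rule ccontr)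
      assume "\<not> ?thesis"
      hence z: "\<forall>k\<in>{N1+1..N}. c k = 0" by auto
      have "(\<Sum>k=1..N. c k) = (\<Sum>k=1..N1. c k) + (\<Sum>k=N1+1..N. c k)"
        by (rule sum_split1[OF N1N])
      also have "(\<Sum>k=N1+1..N. c k) = 0" using z by simp
      finally have "(\<Sum>k=1..N1. c k) = 0" using assms(10) by simp
      hence "\<forall>k\<in>{1..N1}. c k = 0"
        using sum_nonneg_eq_0_iff[of "{1..N1}" c] assms(8) by auto
      with z assms(7) show False by auto
    qed
    then obtain k where k: "k \<in> {N1+1..N}" "c k \<noteq> 0" by auto
    have pk: "p k > 0" using assms(5) k(1) by simp
    show ?thesis unfolding Q_def
      by (rule sum_pos2[OF _ k(1)]) (use k pk in \<open>auto simp: zero_less_mult_iff\<close>)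
  qed
  have Q0: "\<alpha>*(\<alpha>-1)/2*Q \<noteq> 0" using Qpos a1 by simp
  have E2: "eventually (\<lambda>\<epsilon>. (F \<epsilon> - S)/\<epsilon>^2 = C*\<epsilon> powr (\<alpha>-2) + Bq \<epsilon>) (at_right 0)" if T0: "T = 0"
    using evp
  proof eventually_elim
    case (elim \<epsilon>)
    have "\<epsilon> powr \<alpha> = \<epsilon> powr (\<alpha>-2) * \<epsilon> powr 2" by (simp add: powr_add[symmetric])
    hence "\<epsilon> powr \<alpha> = \<epsilon> powr (\<alpha>-2) * \<epsilon>^2" using elim by simp
    thus ?case using elim T0 by (simp add: Fdec Bsplit field_simps)
  qed
  have sq0: "((\<lambda>\<epsilon>::real. \<epsilon>^2) \<longlongrightarrow> 0) (at_right 0)" by (auto intro!: tendsto_eq_intros)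
  have sqne: "eventually (\<lambda>\<epsilon>::real. \<epsilon>^2 \<noteq> 0) (at_right 0)" using evp by eventually_elim simp
  have part1: "T \<noteq> 0 \<longrightarrow> D \<sim>[at_right 0] (\<lambda>\<epsilon>. \<alpha> * \<epsilon> / (\<alpha> - 1) * T / S)"
  proof
    assume T: "T \<noteq> 0"
    have ev: "eventually (\<lambda>\<epsilon>. (F \<epsilon> - S)/\<epsilon> = C*\<epsilon> powr (\<alpha>-1) + \<epsilon> * Bq \<epsilon> + \<alpha>*T) (at_right 0)"
      using evp
    proof eventually_elim
      case (elim \<epsilon>)
      have "\<epsilon> powr \<alpha> = \<epsilon> powr (\<alpha>-1) * \<epsilon> powr 1" using powr_add[of \<epsilon> "\<alpha>-1" 1] by simp
      hence "\<epsilon> powr \<alpha> = \<epsilon> powr (\<alpha>-1) * \<epsilon>" using elim by simp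
      thus ?case using elim by (simp add: Fdec Bsplit field_simps power2_eq_square)
    qed
    have "((\<lambda>\<epsilon>. C*\<epsilon> powr (\<alpha>-1) + \<epsilon> * Bq \<epsilon> + \<alpha>*T) \<longlongrightarrow> C*0 + 0*(\<alpha>*(\<alpha>-1)/2*Q) + \<alpha>*T) (at_right 0)"
      by (intro tendsto_add tendsto_mult tendsto_const plim Bqlim tendsto_ident_at) (use a1 in simp)
    hence "((\<lambda>\<epsilon>. (F \<epsilon> - S)/\<epsilon>) \<longlongrightarrow> \<alpha>*T) (at_right 0)"
      using ev by (simp add: tendsto_cong)
    moreover have "eventually (\<lambda>\<epsilon>::real. \<epsilon> \<noteq> 0) (at_right 0)" using evp by eventually_elim simp
    moreover have "\<alpha>*T \<noteq> 0" using T a1 by simp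
    ultimately have "D \<sim>[at_right 0] (\<lambda>\<epsilon>. \<alpha>*T*\<epsilon>/S/(\<alpha>-1))"
      unfolding Dform using logequiv[OF Spos a1, of "\<alpha>*T" F "\<lambda>x. x"] by simp
    also have "(\<lambda>\<epsilon>. \<alpha>*T*\<epsilon>/S/(\<alpha>-1)) = (\<lambda>\<epsilon>. \<alpha> * \<epsilon> / (\<alpha> - 1) * T / S)"
      by (simp add: fun_eq_iff field_simps)
    finally show "D \<sim>[at_right 0] (\<lambda>\<epsilon>. \<alpha> * \<epsilon> / (\<alpha> - 1) * T / S)" .
  qed
  have part2: "T = 0 \<and> \<alpha> < 2 \<and> N1 \<ge> 1 \<and> (\<exists>k\<in>{1..N1}. c k \<noteq> 0) \<longrightarrow>
        D \<sim>[at_right 0] (\<lambda>\<epsilon>. \<epsilon> powr \<alpha> / (\<alpha> - 1) * (\<Sum>k=1..N1. c k powr \<alpha>) / S)"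
  proof
    assume H: "T = 0 \<and> \<alpha> < 2 \<and> N1 \<ge> 1 \<and> (\<exists>k\<in>{1..N1}. c k \<noteq> 0)"
    then obtain k where k: "k \<in> {1..N1}" "c k \<noteq> 0" by auto
    have Cpos: "C > 0" unfolding C_def
      by (rule sum_pos2[OF _ k(1)]) (use k assms(8) in \<open>auto simp: order.order_iff_strict\<close>)
    have ev: "eventually (\<lambda>\<epsilon>. (F \<epsilon> - S)/\<epsilon> powr \<alpha> = C + Bq \<epsilon> * \<epsilon> powr (2-\<alpha>)) (at_right 0)"
      using evp
    proof eventually_elim
      case (elim \<epsilon>)
      have "\<epsilon> powr (2-\<alpha>) * \<epsilon> powr \<alpha> = \<epsilon> powr 2" by (simp add: powr_add[symmetric])
      hence "\<epsilon> powr (2-\<alpha>) * \<epsilon> powr \<alpha> = \<epsilon>^2" using elim by simp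
      thus ?case using elim H by (simp add: Fdec Bsplit field_simps)
    qed
    have "((\<lambda>\<epsilon>. C + Bq \<epsilon> * \<epsilon> powr (2-\<alpha>)) \<longlongrightarrow> C + (\<alpha>*(\<alpha>-1)/2*Q)*0) (at_right 0)"
      by (intro tendsto_add tendsto_mult tendsto_const plim Bqlim) (use H in simp)
    hence "((\<lambda>\<epsilon>. (F \<epsilon> - S)/\<epsilon> powr \<alpha>) \<longlongrightarrow> C) (at_right 0)"
      using ev by (simp add: tendsto_cong)
    moreover have "eventually (\<lambda>\<epsilon>::real. \<epsilon> powr \<alpha> \<noteq> 0) (at_right 0)" using evp by eventually_elim simp
    moreover have "C \<noteq> 0" using Cpos by simp
    moreover have "((\<lambda>\<epsilon>::real. \<epsilon> powr \<alpha>) \<longlongrightarrow> 0) (at_right 0)" using plim a1 by simp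
    ultimately have "D \<sim>[at_right 0] (\<lambda>\<epsilon>. C*\<epsilon> powr \<alpha>/S/(\<alpha>-1))"
      unfolding Dform using logequiv[OF Spos a1, of C F "\<lambda>x. x powr \<alpha>"] by simp
    also have "(\<lambda>\<epsilon>. C*\<epsilon> powr \<alpha>/S/(\<alpha>-1)) = (\<lambda>\<epsilon>. \<epsilon> powr \<alpha> / (\<alpha> - 1) * (\<Sum>k=1..N1. c k powr \<alpha>) / S)"
      by (simp add: fun_eq_iff field_simps C_def)
    finally show "D \<sim>[at_right 0] (\<lambda>\<epsilon>. \<epsilon> powr \<alpha> / (\<alpha> - 1) * (\<Sum>k=1..N1. c k powr \<alpha>) / S)" .
  qed
  have part35: "D \<sim>[at_right 0] (\<lambda>\<epsilon>. \<alpha> * \<epsilon>\<^sup>2 / 2 * (\<Sum>k=N1+1..N. (c k)\<^sup>2 * p k powr (\<alpha> - 2)) / S)"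
    if T0: "T = 0" and Cz: "((\<lambda>\<epsilon>. C*\<epsilon> powr (\<alpha>-2)) \<longlongrightarrow> 0) (at_right 0)"
  proof -
    have "((\<lambda>\<epsilon>. C*\<epsilon> powr (\<alpha>-2) + Bq \<epsilon>) \<longlongrightarrow> 0 + \<alpha>*(\<alpha>-1)/2*Q) (at_right 0)"
      by (intro tendsto_add Cz Bqlim)
    hence "((\<lambda>\<epsilon>. (F \<epsilon> - S)/\<epsilon>^2) \<longlongrightarrow> \<alpha>*(\<alpha>-1)/2*Q) (at_right 0)"
      using E2[OF T0] by (simp add: tendsto_cong)
    from logequiv[OF Spos a1 Q0 this sq0 sqne]
    have "D \<sim>[at_right 0] (\<lambda>\<epsilon>. \<alpha>*(\<alpha>-1)/2*Q*\<epsilon>^2/S/(\<alpha>-1))"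
      unfolding Dform .
    also have "(\<lambda>\<epsilon>. \<alpha>*(\<alpha>-1)/2*Q*\<epsilon>^2/S/(\<alpha>-1)) = (\<lambda>\<epsilon>. \<alpha> * \<epsilon>\<^sup>2 / 2 * Q / S)"
      using a1 Spos by (simp add: fun_eq_iff field_simps)
    also have "\<dots> = (\<lambda>\<epsilon>. \<alpha> * \<epsilon>\<^sup>2 / 2 * (\<Sum>k=N1+1..N. (c k)\<^sup>2 * p k powr (\<alpha> - 2)) / S)"
      by (simp add: Q_def)
    finally show ?thesis .
  qed
  have part3: "T = 0 \<and> \<alpha> < 2 \<and> (\<forall>k\<in>{1..N1}. c k = 0) \<longrightarrow>
        D \<sim>[at_right 0] (\<lambda>\<epsilon>. \<alpha> * \<epsilon>\<^sup>2 / 2 * (\<Sum>k=N1+1..N. (c k)\<^sup>2 * p k powr (\<alpha> - 2)) / S)"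
  proof
    assume H: "T = 0 \<and> \<alpha> < 2 \<and> (\<forall>k\<in>{1..N1}. c k = 0)"
    hence "C = 0" unfolding C_def by simp
    thus "D \<sim>[at_right 0] (\<lambda>\<epsilon>. \<alpha> * \<epsilon>\<^sup>2 / 2 * (\<Sum>k=N1+1..N. (c k)\<^sup>2 * p k powr (\<alpha> - 2)) / S)"
      using H by (intro part35) auto
  qed
  have part5: "T = 0 \<and> \<alpha> > 2 \<longrightarrow>
        D \<sim>[at_right 0] (\<lambda>\<epsilon>. \<alpha> * \<epsilon>\<^sup>2 / 2 * (\<Sum>k=N1+1..N. (c k)\<^sup>2 * p k powr (\<alpha> - 2)) / S)"
  proof
    assume H: "T = 0 \<and> \<alpha> > 2"
    have "((\<lambda>\<epsilon>. C*\<epsilon> powr (\<alpha>-2)) \<longlongrightarrow> C*0) (at_right 0)"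
      by (intro tendsto_mult tendsto_const plim) (use H in simp)
    thus "D \<sim>[at_right 0] (\<lambda>\<epsilon>. \<alpha> * \<epsilon>\<^sup>2 / 2 * (\<Sum>k=N1+1..N. (c k)\<^sup>2 * p k powr (\<alpha> - 2)) / S)"
      using H by (intro part35) auto
  qed
  have part4: "T = 0 \<and> \<alpha> = 2 \<longrightarrow>
        D \<sim>[at_right 0] (\<lambda>\<epsilon>. \<epsilon>\<^sup>2 * (\<Sum>k=1..N. (c k)\<^sup>2) / (\<Sum>k=N1+1..N. (p k)\<^sup>2))"
  proof
    assume H: "T = 0 \<and> \<alpha> = 2"
    hence a2: "\<alpha> = 2" and T0: "T = 0" by auto
    have Ceq: "C = (\<Sum>k=1..N1. (c k)^2)" unfolding C_def a2
      by (intro sum.cong) (use assms(8) in auto)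
    have Qeq: "Q = (\<Sum>k=N1+1..N. (c k)^2)" unfolding Q_def a2
      by (intro sum.cong) (use assms(5) in fastforce)+
    have Seq: "S = (\<Sum>k=N1+1..N. (p k)^2)" unfolding S_def a2
      by (intro sum.cong) (use assms(5) in fastforce)+
    define K where "K = (\<Sum>k=1..N. (c k)^2)"
    have Keq: "K = C + Q" unfolding K_def Ceq Qeq by (rule sum_split1[OF N1N])
    have Kpos: "K > 0"
    proof -
      obtain k where k: "k \<in> {1..N}" "c k \<noteq> 0" using assms(7) by auto
      show ?thesis unfolding K_def by (rule sum_pos2[OF _ k(1)]) (use k in auto)
    qed
    have ev: "eventually (\<lambda>\<epsilon>. (F \<epsilon> - S)/\<epsilon>^2 = C + Bq \<epsilon>) (at_right 0)"
      using E2[OF T0] evp by eventually_elim (simp add: a2)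
    have "((\<lambda>\<epsilon>. C + Bq \<epsilon>) \<longlongrightarrow> C + \<alpha>*(\<alpha>-1)/2*Q) (at_right 0)"
      by (intro tendsto_add tendsto_const Bqlim)
    hence "((\<lambda>\<epsilon>. (F \<epsilon> - S)/\<epsilon>^2) \<longlongrightarrow> K) (at_right 0)"
      using ev by (simp add: tendsto_cong Keq a2)
    from logequiv[OF Spos a1 _ this sq0 sqne] Kpos
    have "D \<sim>[at_right 0] (\<lambda>\<epsilon>. K*\<epsilon>^2/S/(\<alpha>-1))"
      unfolding Dform by simp
    also have "(\<lambda>\<epsilon>. K*\<epsilon>^2/S/(\<alpha>-1)) = (\<lambda>\<epsilon>. \<epsilon>\<^sup>2 * (\<Sum>k=1..N. (c k)\<^sup>2) / (\<Sum>k=N1+1..N. (p k)\<^sup>2))"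
      by (simp add: fun_eq_iff a2 K_def Seq)
    finally show "D \<sim>[at_right 0] (\<lambda>\<epsilon>. \<epsilon>\<^sup>2 * (\<Sum>k=1..N. (c k)\<^sup>2) / (\<Sum>k=N1+1..N. (p k)\<^sup>2))" .
  qed
  show ?thesis using part1 part2 part3 part4 part5 by blast
qed

end
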